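(* A sequence $(k;a_1,\dots,a_n;b,\beta)$ of non-negative integers is the generalized inversion table of some $(N,E)\in\mathcal{N}_{n,1}$ if and only if: (i) $3\le k\le n$; (ii) $0\le a_i\le i-1$ for all $1\le i\le n$; (iii) $a_{k-1}<a_k$; (iv) $a_{k-1}+\beta<a_k+b\le k-2$. Moreover, in that case $(N,E)$ is unique.
   Context: An alternating sign matrix (ASM) of order $n$ is an $n\times n$ matrix $A=(a_{ij})$ with entries in $\{-1,0,1\}$ such that in every row and every column the nonzero entries alternate in sign, the first and the last nonzero entries being $1$. $\mathcal{A}_{n,1}$ denotes the set of order-$n$ ASMs having exactly one entry equal to $-1$. Let $A\in\mathcal{A}_{n,1}$. The opening column is the column containing the unique $-1$; the closing row is the row containing the $-1$; the opening row is the row of the $1$ of the opening column lying above the $-1$. The columns strictly to the left (resp. right) of the opening column form the left side (resp. right side). The closing row contains exactly two $1$'s, one in each side; the one in the right side is the closing $1$ and its column is the closing column. $A$ is neutral if the closing row is the row immediately below the opening row; $\mathcal{A}_{n,1}^{0}$ denotes the set of neutral elements of $\mathcal{A}_{n,1}$. For $N\in\mathcal{A}_{n,1}^{0}$: the leading $1$ is the highest $1$ in the left side strictly below the opening row; its column is the leading column; the leading cell consists of the entries strictly below the opening row and strictly between the leading column and the opening column, and $\ell(N)$ is the sum of its entries. The closing cell consists of the entries strictly below the closing row and strictly between the opening column and the closing column, and $c(N)$ is the sum of its entries. $\mathcal{N}_{n,1}=\{(N,E)\,:\,N\in\mathcal{A}_{n,1}^{0},\ E\in\mathbb{Z},\ -\ell(N)\le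 E\le c(N)\}$. Generalized inversion table: for $(N,E)\in\mathcal{N}_{n,1}$, let $n+1-k$ be the index of the opening row of $N$ (so the closing row is row $n+2-k$). For $1\le i\le n$, $a_i$ is the sum of the entries of $N$ lying strictly below row $n+1-i$ and strictly to the left of the unique $1$ of row $n+1-i$ (for $i=k-1$, i.e. the closing row, the leftmost $1$ of that row is used). Let $b=c(N)$ and $\beta=E+\ell(N)$. The generalized inversion table of $(N,E)$ is $(k;a_1,\dots,a_n;b,\beta)$. *)

theory Defs
  imports Main
begin

(* Matrices of order n are functions nat => nat => int, indices 1..n (row, column),
   required to vanish outside {1..n} x {1..n}. Row 1 is the top row, column 1 the leftmost. *)

definition alternating :: "int list \<Rightarrow> bool" where
  "alternating xs \<longleftrightarrow> xs \<noteq> [] \<and> hd xs = 1 \<and> last xs = 1 \<and>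
     (\<forall>i. Suc i < length xs \<longrightarrow> xs ! Suc i = - (xs ! i))"

definition is_asm :: "nat \<Rightarrow> (nat \<Rightarrow> nat \<Rightarrow> int) \<Rightarrow> bool" where
  "is_asm n A \<longleftrightarrow>
     (\<forall>i j. A i j \<in> {-1, 0, 1}) \<and>
     (\<forall>i j. (i \<notin> {1..n} \<or> j \<notin> {1..n}) \<longrightarrow> A i j = 0) \<and>
     (\<forall>i\<in>{1..n}. alternating [A i j. j \<leftarrow> [1..<n+1], A i j \<noteq> 0]) \<and>
     (\<forall>j\<in>{1..n}. alternating [A i j. i \<leftarrow> [1..<n+1], A i j \<noteq> 0])"

definition asm_one :: "nat \<Rightarrow> (nat \<Rightarrow> nat \<Rightarrow> int) set" where
  "asm_one n = {A. is_asm n A \<and>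
      card {(i, j). i \<in> {1..n} \<and> j \<in> {1..n} \<and> A i j = -1} = 1}"

definition minus_pos :: "nat \<Rightarrow> (nat \<Rightarrow> nat \<Rightarrow> int) \<Rightarrow> nat \<times> nat" where
  "minus_pos n A = (THE p. fst p \<in> {1..n} \<and> snd p \<in> {1..n} \<and> A (fst p) (snd p) = -1)"

definition closing_row :: "nat \<Rightarrow> (nat \<Rightarrow> nat \<Rightarrow> int) \<Rightarrow> nat" where
  "closing_row n A = fst (minus_pos n A)"

definition opening_col :: "nat \<Rightarrow> (nat \<Rightarrow> nat \<Rightarrow> int) \<Rightarrow> nat" where
  "opening_col n A = snd (minus_pos n A)"

definition opening_row :: "nat \<Rightarrow> (nat \<Rightarrow> nat \<Rightarrow> int) \<Rightarrow> nat" where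
  "opening_row n A = (THE i. i < closing_row n A \<and> A i (opening_col n A) = 1)"

definition closing_col :: "nat \<Rightarrow> (nat \<Rightarrow> nat \<Rightarrow> int) \<Rightarrow> nat" where
  "closing_col n A = (THE j. opening_col n A < j \<and> A (closing_row n A) j = 1)"

definition neutral :: "nat \<Rightarrow> (nat \<Rightarrow> nat \<Rightarrow> int) \<Rightarrow> bool" where
  "neutral n A \<longleftrightarrow> closing_row n A = Suc (opening_row n A)"

definition asm_one_neutral :: "nat \<Rightarrow> (nat \<Rightarrow> nat \<Rightarrow> int) set" where
  "asm_one_neutral n = {A \<in> asm_one n. neutral n A}"

definition leading_row :: "nat \<Rightarrow> (nat \<Rightarrow> nat \<Rightarrow> int) \<Rightarrow> nat" where
  "leading_row n A = (LEAST i. opening_row n A < i \<and> (\<exists>j < opening_col n A. A i j = 1))"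

definition leading_col :: "nat \<Rightarrow> (nat \<Rightarrow> nat \<Rightarrow> int) \<Rightarrow> nat" where
  "leading_col n A = (THE j. j < opening_col n A \<and> A (leading_row n A) j = 1)"

definition ell :: "nat \<Rightarrow> (nat \<Rightarrow> nat \<Rightarrow> int) \<Rightarrow> int" where
  "ell n A = (\<Sum>i\<in>{opening_row n A<..n}. \<Sum>j\<in>{leading_col n A<..<opening_col n A}. A i j)"

definition cN :: "nat \<Rightarrow> (nat \<Rightarrow> nat \<Rightarrow> int) \<Rightarrow> int" where
  "cN n A = (\<Sum>i\<in>{closing_row n A<..n}. \<Sum>j\<in>{opening_col n A<..<closing_col n A}. A i j)"

definition Nset :: "nat \<Rightarrow> ((nat \<Rightarrow> nat \<Rightarrow> int) \<times> int) set" where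
  "Nset n = {(N, E). N \<in> asm_one_neutral n \<and> - ell n N \<le> E \<and> E \<le> cN n N}"

definition one_col :: "nat \<Rightarrow> (nat \<Rightarrow> nat \<Rightarrow> int) \<Rightarrow> nat \<Rightarrow> nat" where
  "one_col n A r = (if r = closing_row n A then (LEAST j. A r j = 1) else (THE j. A r j = 1))"

definition a_entry :: "nat \<Rightarrow> (nat \<Rightarrow> nat \<Rightarrow> int) \<Rightarrow> nat \<Rightarrow> int" where
  "a_entry n A i = (\<Sum>r\<in>{n+1-i<..n}. \<Sum>j\<in>{1..<one_col n A (n+1-i)}. A r j)"

(* generalized inversion table (k; a_1..a_n; b, beta); the list a stores a_i at index i-1 *)
definition git :: "nat \<Rightarrow> (nat \<Rightarrow> nat \<Rightarrow> int) \<times> int \<Rightarrow> int \<times> int list \<times> int \<times> int" where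
  "git n NE = (case NE of (N, E) \<Rightarrow>
     (int n + 1 - int (opening_row n N), map (a_entry n N) [1..<n+1], cN n N, E + ell n N))"

end

theory Submission
  imports Defs "HOL-Combinatorics.Permutations"
begin

lemma LC: "[f j. j \<leftarrow> xs, P j] = map f (filter P xs)"
  by (induction xs) auto

lemma set_filt_upt: "set (filter P [a..<b]) = {j. a \<le> j \<and> j < b \<and> P j}"
  by auto

lemma alt_nth: "alternating xs \<Longrightarrow> i < length xs \<Longrightarrow> xs ! i = (-1)^i"
proof (induction i)
  case 0 then show ?case by (cases xs) (auto simp: alternating_def)
next
  case (Suc i) then show ?case by (simp add: alternating_def)
qed

lemma alt_odd: assumes "alternating xs" shows "odd (length xs)"
proof -
  have ne: "xs \<noteq> []" and l: "last xs = 1" using assms by (auto simp: alternating_def)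
  have "xs ! (length xs - 1) = (-1)^(length xs - 1)" using alt_nth[OF assms] ne by simp
  moreover have "xs ! (length xs - 1) = 1" using l ne by (simp add: last_conv_nth)
  ultimately have "even (length xs - 1)"
    by (metis neg_one_odd_power one_neq_neg_one)
  then show ?thesis using ne by (cases "length xs") auto
qed

lemma line_one:
  fixes v :: "nat \<Rightarrow> int"
  assumes alt: "alternating (map v (filter (\<lambda>j. v j \<noteq> 0) [1..<n+1]))"
    and nm: "\<forall>j\<in>{1..n}. v j \<noteq> -1"
  shows "\<exists>j0. j0\<in>{1..n} \<and> v j0 = 1 \<and> (\<forall>j\<in>{1..n}. j \<noteq> j0 \<longrightarrow> v j = 0)"
proof -
  define F where "F = filter (\<lambda>j. v j \<noteq> 0) [1..<n+1]"
  have sF: "set F \<subseteq> {1..n}" unfolding F_def by auto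
  have alt': "alternating (map v F)" using alt F_def by simp
  have ne: "F \<noteq> []" using alt' by (auto simp: alternating_def)
  have "length F < 2"
  proof (rule ccontr)
    assume "\<not> length F < 2"
    then have "map v F ! 1 = -1" using alt_nth[OF alt', of 1] by simp
    moreover have "map v F ! 1 = v (F ! 1)" using \<open>\<not> length F < 2\<close> by simp
    moreover have "F ! 1 \<in> set F" using \<open>\<not> length F < 2\<close> by simp
    ultimately show False using sF nm by auto
  qed
  then obtain j0 where F: "F = [j0]" using ne by (cases F) auto
  have "j0 \<in> {1..n}" using sF F by auto
  moreover have "v j0 = 1" using alt' F by (simp add: alternating_def)
  moreover have "\<forall>j\<in>{1..n}. j \<noteq> j0 \<longrightarrow> v j = 0"
  proof (intro ballI impI)
    fix j assume "j \<in> {1..n}" "j \<noteq> j0"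
    show "v j = 0"
    proof (rule ccontr)
      assume "v j \<noteq> 0" then have "j \<in> set F" unfolding F_def set_filt_upt using \<open>j \<in> {1..n}\<close> by simp
      then show False using F \<open>j \<noteq> j0\<close> by simp
    qed
  qed
  ultimately show ?thesis by blast
qed

lemma line_three:
  fixes v :: "nat \<Rightarrow> int"
  assumes alt: "alternating (map v (filter (\<lambda>j. v j \<noteq> 0) [1..<n+1]))"
    and c: "c \<in> {1..n}" "v c = -1"
    and nm: "\<forall>j\<in>{1..n}. j \<noteq> c \<longrightarrow> v j \<noteq> -1"
  shows "\<exists>p q. 1 \<le> p \<and> p < c \<and> c < q \<and> q \<le> n \<and> v p = 1 \<and> v q = 1 \<and>
     (\<forall>j\<in>{1..n}. j \<noteq> p \<and> j \<noteq> c \<and> j \<noteq> q \<longrightarrow> v j = 0)"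
proof -
  define P where "P = (\<lambda>j. v j \<noteq> 0)"
  define F1 where "F1 = filter P [1..<c]"
  define F2 where "F2 = filter P [Suc c..<n+1]"
  have split: "[1..<n+1] = [1..<c] @ c # [Suc c..<n+1]"
  proof -
    have "[1..<n+1] = [1..<c] @ [c..<c+(n+1-c)]" using c upt_add_eq_append[of 1 c "n+1-c"] by simp
    also have "c+(n+1-c) = n+1" using c by simp
    also have "[c..<n+1] = c # [Suc c..<n+1]" using c by (intro upt_conv_Cons) auto
    finally show ?thesis .
  qed
  have "filter P [1..<n+1] = F1 @ c # F2" unfolding F1_def F2_def split P_def using c by simp
  then have alt': "alternating (map v F1 @ (-1) # map v F2)" using alt c unfolding P_def by simp
  have s1: "set F1 \<subseteq> {1..<c}" and s2: "set F2 \<subseteq> {Suc c..n}" unfolding F1_def F2_def by auto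
  have m1: "-1 \<notin> set (map v F1)"
  proof
    assume "-1 \<in> set (map v F1)" then obtain x where "x \<in> set F1" "v x = -1" by auto
    then show False using s1 nm c by force
  qed
  have m2: "-1 \<notin> set (map v F2)"
  proof
    assume "-1 \<in> set (map v F2)" then obtain x where "x \<in> set F2" "v x = -1" by auto
    then show False using s2 nm c by force
  qed
  let ?xs = "map v F1 @ (-1) # map v F2"
  have "?xs ! length F1 = (-1)^(length F1)" using alt_nth[OF alt', of "length F1"] by simp
  then have "(-1::int)^(length F1) = -1" by (simp add: nth_append)
  then have o1: "odd (length F1)" by (metis neg_one_even_power one_neq_neg_one)
  have l1: "length F1 < 2"
  proof (rule ccontr)
    assume a: "\<not> length F1 < 2"
    then have "1 < length ?xs" by (cases F1) auto
    then have "?xs ! 1 = -1" using alt_nth[OF alt', of 1] by simp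
    moreover have "?xs ! 1 = map v F1 ! 1" using a by (simp add: nth_append)
    moreover have "map v F1 ! 1 \<in> set (map v F1)" using a by (intro nth_mem) simp
    ultimately show False using m1 by simp
  qed
  have "length F1 = 1" using o1 l1 by presburger
  then obtain p where F1: "F1 = [p]" by (cases F1) auto
  have "F2 \<noteq> []" using alt' unfolding alternating_def by auto
  have l2: "length F2 < 2"
  proof (rule ccontr)
    assume a: "\<not> length F2 < 2"
    then have "3 < length ?xs" using F1 by simp
    then have "?xs ! 3 = -1" using alt_nth[OF alt', of 3] by simp
    moreover have "?xs ! 3 = map v F2 ! 1" using a F1 by (simp add: nth_append)
    moreover have "map v F2 ! 1 \<in> set (map v F2)" using a by (intro nth_mem) simp
    ultimately show False using m2 by simp
  qed
  obtain q where F2: "F2 = [q]" using \<open>F2 \<noteq> []\<close> l2 by (cases F2) auto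
  have p: "1 \<le> p" "p < c" using s1 F1 by auto
  have q: "c < q" "q \<le> n" using s2 F2 by auto
  have vp: "v p = 1" using alt' F1 by (simp add: alternating_def)
  have vq: "v q = 1" using alt' F2 by (simp add: alternating_def)
  have "\<forall>j\<in>{1..n}. j \<noteq> p \<and> j \<noteq> c \<and> j \<noteq> q \<longrightarrow> v j = 0"
  proof (intro ballI impI)
    fix j assume j: "j \<in> {1..n}" "j \<noteq> p \<and> j \<noteq> c \<and> j \<noteq> q"
    show "v j = 0"
    proof (rule ccontr)
      assume "v j \<noteq> 0"
      then have "j \<in> set F1 \<or> j \<in> set F2" unfolding F1_def F2_def P_def set_filt_upt using j by auto
      then show False using F1 F2 j by simp
    qed
  qed
  then show ?thesis using p q vp vq by blast
qed

lemma filt_eq: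
  assumes "{j\<in>{1..n}. P j} = set ys" "sorted ys" "distinct ys"
  shows "filter P [1..<n+1] = ys"
proof (rule sorted_distinct_set_unique)
  show "sorted (filter P [1..<n+1])" using sorted_upt[of 1 "n+1"] sorted_wrt_filter by blast
  show "distinct (filter P [1..<n+1])" by simp
  show "set (filter P [1..<n+1]) = set ys" unfolding set_filt_upt assms(1)[symmetric] by auto
qed (use assms in auto)

lemma alt_single:
  fixes v :: "nat \<Rightarrow> int"
  assumes "j0 \<in> {1..n}" "v j0 = 1" "\<forall>j\<in>{1..n}. j \<noteq> j0 \<longrightarrow> v j = 0"
  shows "alternating [v j. j \<leftarrow> [1..<n+1], v j \<noteq> 0]"
proof -
  have "{j\<in>{1..n}. v j \<noteq> 0} = set [j0]" using assms by force
  then have "filter (\<lambda>j. v j \<noteq> 0) [1..<n+1] = [j0]"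
    by (rule filt_eq) auto
  then show ?thesis unfolding LC by (simp add: alternating_def assms)
qed

lemma alt_triple:
  fixes v :: "nat \<Rightarrow> int"
  assumes "1 \<le> p" "p < c" "c < q" "q \<le> n" "v p = 1" "v c = -1" "v q = 1"
    "\<forall>j\<in>{1..n}. j \<noteq> p \<and> j \<noteq> c \<and> j \<noteq> q \<longrightarrow> v j = 0"
  shows "alternating [v j. j \<leftarrow> [1..<n+1], v j \<noteq> 0]"
proof -
  have "{j\<in>{1..n}. v j \<noteq> 0} = set [p, c, q]"
  proof
    show "{j\<in>{1..n}. v j \<noteq> 0} \<subseteq> set [p, c, q]" using assms(8) by auto
    show "set [p, c, q] \<subseteq> {j\<in>{1..n}. v j \<noteq> 0}" using assms(1-7) by auto
  qed
  then have "filter (\<lambda>j. v j \<noteq> 0) [1..<n+1] = [p, c, q]"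
    by (rule filt_eq) (use assms(2,3) in auto)
  then have L: "[v j. j \<leftarrow> [1..<n+1], v j \<noteq> 0] = [1, -1, 1]" unfolding LC using assms(5-7) by simp
  show ?thesis unfolding L alternating_def
  proof (intro conjI allI impI)
    fix i assume "Suc i < length [1::int, -1, 1]"
    then have "i = 0 \<or> i = 1" by auto
    then show "[1::int, -1, 1] ! Suc i = - ([1, -1, 1] ! i)" by auto
  qed auto
qed

definition rk :: "nat set \<Rightarrow> nat \<Rightarrow> nat" where
  "rk V x = card {y\<in>V. y < x}"

lemma rk_mono: "finite V \<Longrightarrow> x \<le> x' \<Longrightarrow> rk V x \<le> rk V x'"
  unfolding rk_def by (rule card_mono) auto

lemma rk_strict: "finite V \<Longrightarrow> x \<in> V \<Longrightarrow> x < x' \<Longrightarrow> rk V x < rk V x'"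
  unfolding rk_def by (rule psubset_card_mono) auto

lemma rk_inj: "finite V \<Longrightarrow> x \<in> V \<Longrightarrow> x' \<in> V \<Longrightarrow> rk V x = rk V x' \<Longrightarrow> x = x'"
proof (rule ccontr)
  assume a: "finite V" "x \<in> V" "x' \<in> V" "rk V x = rk V x'" "x \<noteq> x'"
  then have "x < x' \<or> x' < x" by arith
  then show False using rk_strict[OF a(1) a(2), of x'] rk_strict[OF a(1) a(3), of x] a(4) by auto
qed

definition code :: "nat \<Rightarrow> (nat \<Rightarrow> nat) \<Rightarrow> nat \<Rightarrow> nat" where
  "code n \<sigma> R = card {R'. R < R' \<and> R' \<le> n \<and> \<sigma> R' < \<sigma> R}"

lemma code_le: "code n \<sigma> R \<le> n - R"
proof -
  have "code n \<sigma> R \<le> card {R<..n}" unfolding code_def by (rule card_mono) auto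
  then show ?thesis by simp
qed

lemma permutes_img_split:
  fixes \<sigma> :: "nat \<Rightarrow> nat"
  assumes "\<sigma> permutes {1..n}" "1 \<le> R0" "R0 \<le> n"
  shows "\<sigma> ` {R0..n} = {1..n} - \<sigma> ` {1..<R0}"
proof -
  have b: "bij_betw \<sigma> {1..n} {1..n}" using assms(1) by (rule permutes_imp_bij)
  have i: "inj_on \<sigma> {1..n}" using bij_betw_imp_inj_on[OF b] .
  have "{R0..n} = {1..n} - {1..<R0}"
  proof (rule set_eqI)
    fix x show "x \<in> {R0..n} \<longleftrightarrow> x \<in> {1..n} - {1..<R0}" using assms(2) by auto
  qed
  then have "\<sigma> ` {R0..n} = \<sigma> ` ({1..n} - {1..<R0})" by simp
  also have "\<dots> = \<sigma> ` {1..n} - \<sigma> ` {1..<R0}"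
  proof (rule inj_on_image_set_diff[OF i])
    show "{1..<R0} \<subseteq> {1..n}" using assms(3) by (simp add: subset_iff)
  qed simp
  finally show ?thesis using bij_betw_imp_surj_on[OF b] by simp
qed

lemma code_rk:
  assumes "\<sigma> permutes {1..n}" "R \<in> {1..n}"
  shows "code n \<sigma> R = rk (\<sigma> ` {R..n}) (\<sigma> R)"
proof -
  have i: "inj_on \<sigma> {1..n}" using bij_betw_imp_inj_on[OF permutes_imp_bij[OF assms(1)]] .
  have "{y \<in> \<sigma> ` {R..n}. y < \<sigma> R} = \<sigma> ` {R'. R < R' \<and> R' \<le> n \<and> \<sigma> R' < \<sigma> R}"
  proof
    show "{y \<in> \<sigma> ` {R..n}. y < \<sigma> R} \<subseteq> \<sigma> ` {R'. R < R' \<and> R' \<le> n \<and> \<sigma> R' < \<sigma> R}"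
    proof
      fix y assume "y \<in> {y \<in> \<sigma> ` {R..n}. y < \<sigma> R}"
      then obtain R' where "R' \<in> {R..n}" "y = \<sigma> R'" "y < \<sigma> R" by auto
      moreover then have "R' \<noteq> R" by auto
      ultimately show "y \<in> \<sigma> ` {R'. R < R' \<and> R' \<le> n \<and> \<sigma> R' < \<sigma> R}" by auto
    qed
  qed auto
  moreover have "card (\<sigma> ` {R'. R < R' \<and> R' \<le> n \<and> \<sigma> R' < \<sigma> R}) = code n \<sigma> R"
    unfolding code_def
    by (rule card_image, rule inj_on_subset[OF i]) (use assms(2) in auto)
  ultimately show ?thesis unfolding rk_def by simp
qed

lemma code_inj:
  assumes s: "\<sigma> permutes {1..n}" and t: "\<tau> permutes {1..n}"
    and eq: "\<forall>R\<in>{1..n}. code n \<sigma> R = code n \<tau> R"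
  shows "\<sigma> = \<tau>"
proof (rule ccontr)
  assume ne: "\<sigma> \<noteq> \<tau>"
  define D where "D = {R\<in>{1..n}. \<sigma> R \<noteq> \<tau> R}"
  have "D \<noteq> {}"
  proof
    assume "D = {}"
    then have "\<sigma> x = \<tau> x" for x
      using permutes_not_in[OF s] permutes_not_in[OF t] unfolding D_def by (cases "x \<in> {1..n}") auto
    then show False using ne by auto
  qed
  define R0 where "R0 = Min D"
  have fD: "finite D" unfolding D_def by auto
  have R0D: "R0 \<in> D" unfolding R0_def using fD \<open>D \<noteq> {}\<close> by simp
  have below: "\<sigma> R' = \<tau> R'" if "R' \<in> {1..<R0}" for R'
  proof (rule ccontr)
    assume "\<sigma> R' \<noteq> \<tau> R'"
    then have "R' \<in> D" using that R0D unfolding D_def by auto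
    then have "R0 \<le> R'" unfolding R0_def using fD by simp
    then show False using that by simp
  qed
  have R0r: "R0 \<in> {1..n}" using R0D D_def by auto
  have "\<sigma> ` {1..<R0} = \<tau> ` {1..<R0}" using below by (rule image_cong[OF refl])
  then have V: "\<sigma> ` {R0..n} = \<tau> ` {R0..n}"
    using permutes_img_split[OF s, of R0] permutes_img_split[OF t, of R0] R0r by simp
  have "rk (\<sigma> ` {R0..n}) (\<sigma> R0) = rk (\<sigma> ` {R0..n}) (\<tau> R0)"
    using code_rk[OF s R0r] code_rk[OF t R0r] eq R0r V by simp
  then have "\<sigma> R0 = \<tau> R0" by (rule rk_inj[rotated 3]) (use R0r V in auto)
  then show False using R0D D_def by auto
qed

definition LS :: "nat \<Rightarrow> nat list set" where
  "LS n = {L. length L = n \<and> (\<forall>i<n. L ! i \<le> n - Suc i)}"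

lemma LS_Suc: "LS (Suc n) = (\<lambda>(x, L). x # L) ` ({0..n} \<times> LS n)"
proof
  show "LS (Suc n) \<subseteq> (\<lambda>(x, L). x # L) ` ({0..n} \<times> LS n)"
  proof
    fix L' assume L': "L' \<in> LS (Suc n)"
    have len: "length L' = Suc n" and bd: "\<forall>i<Suc n. L' ! i \<le> Suc n - Suc i"
      using L' unfolding LS_def by auto
    obtain x L where e: "L' = x # L" using len by (cases L') auto
    have "L' ! 0 \<le> Suc n - Suc 0" using bd by blast
    then have x: "x \<le> n" using e by simp
    have "L \<in> LS n"
      unfolding LS_def
    proof (intro CollectI conjI allI impI)
      show "length L = n" using len e by simp
      fix i assume "i < n"
      then have "L' ! Suc i \<le> Suc n - Suc (Suc i)" using bd by blast
      then show "L ! i \<le> n - Suc i" using e by simp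
    qed
    then have "(x, L) \<in> {0..n} \<times> LS n" using x by simp
    then show "L' \<in> (\<lambda>(x, L). x # L) ` ({0..n} \<times> LS n)" using e by (intro rev_image_eqI) auto
  qed
  show "(\<lambda>(x, L). x # L) ` ({0..n} \<times> LS n) \<subseteq> LS (Suc n)"
  proof
    fix L' assume "L' \<in> (\<lambda>(x, L). x # L) ` ({0..n} \<times> LS n)"
    then obtain x L where e: "L' = x # L" "x \<le> n" "L \<in> LS n" by auto
    have len: "length L = n" and bd: "\<forall>i<n. L ! i \<le> n - Suc i" using e(3) unfolding LS_def by auto
    have "L' ! i \<le> Suc n - Suc i" if "i < Suc n" for i
    proof (cases i)
      case 0 then show ?thesis using e by simp
    next
      case (Suc j) then show ?thesis using e bd that by simp
    qed
    then show "L' \<in> LS (Suc n)" using e len unfolding LS_def by simp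
  qed
qed

lemma LS_card: "finite (LS n) \<and> card (LS n) = fact n"
proof (induction n)
  case 0
  have "LS 0 = {[]}" unfolding LS_def by auto
  then show ?case by simp
next
  case (Suc n)
  have inj: "inj_on (\<lambda>(x, L). x # L) ({0..n} \<times> LS n)" by (auto simp: inj_on_def)
  have "card (LS (Suc n)) = card ({0..n} \<times> LS n)" unfolding LS_Suc by (rule card_image[OF inj])
  also have "\<dots> = Suc n * fact n" using Suc by (simp add: card_cartesian_product)
  finally show ?case using Suc unfolding LS_Suc by simp
qed

lemma map_upt_nth: "i < n \<Longrightarrow> map f [1..<n+1] ! i = f (Suc i)"
  by (simp del: upt_Suc)

lemma map_upt_nth': "R \<in> {1..n} \<Longrightarrow> map f [1..<n+1] ! (R - 1) = f R"
  using map_upt_nth[of "R - 1" n f] by (auto simp del: upt_Suc)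

definition cl :: "nat \<Rightarrow> (nat \<Rightarrow> nat) \<Rightarrow> nat list" where
  "cl n \<sigma> = map (code n \<sigma>) [1..<n+1]"

lemma cl_LS: "cl n \<sigma> \<in> LS n"
  unfolding cl_def LS_def using code_le by (auto simp del: upt_Suc)

lemma code_surj_list:
  assumes "L \<in> LS n"
  shows "\<exists>\<sigma>. \<sigma> permutes {1..n} \<and> cl n \<sigma> = L"
proof -
  let ?P = "{\<sigma>. \<sigma> permutes {1..n}}"
  have inj: "inj_on (cl n) ?P"
  proof (rule inj_onI)
    fix \<sigma> \<tau> assume a: "\<sigma> \<in> ?P" "\<tau> \<in> ?P" "cl n \<sigma> = cl n \<tau>"
    have "\<forall>R\<in>{1..n}. code n \<sigma> R = code n \<tau> R"
    proof
      fix R assume R: "R \<in> {1..n}"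
      have "cl n \<sigma> ! (R - 1) = cl n \<tau> ! (R - 1)" using a by simp
      then show "code n \<sigma> R = code n \<tau> R" using R unfolding cl_def
        by (simp only: map_upt_nth')
    qed
    then show "\<sigma> = \<tau>" using code_inj a by auto
  qed
  have "card (cl n ` ?P) = fact n"
    using card_image[OF inj] card_permutations[of "{1..n}" n] by simp
  moreover have "cl n ` ?P \<subseteq> LS n" using cl_LS by auto
  ultimately have "cl n ` ?P = LS n" using LS_card[of n] by (metis card_subset_eq)
  then have "L \<in> cl n ` ?P" using assms by simp
  then show ?thesis by blast
qed

lemma code_surj:
  assumes "\<forall>R\<in>{1..n}. g R \<le> n - R"
  shows "\<exists>\<sigma>. \<sigma> permutes {1..n} \<and> (\<forall>R\<in>{1..n}. code n \<sigma> R = g R)"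
proof -
  have "map g [1..<n+1] \<in> LS n" unfolding LS_def using assms by (auto simp del: upt_Suc)
  then obtain \<sigma> where s: "\<sigma> permutes {1..n}" "cl n \<sigma> = map g [1..<n+1]"
    using code_surj_list by blast
  have "code n \<sigma> R = g R" if R: "R \<in> {1..n}" for R
  proof -
    have "cl n \<sigma> ! (R - 1) = map g [1..<n+1] ! (R - 1)" using s by simp
    then show ?thesis using R unfolding cl_def by (simp only: map_upt_nth')
  qed
  then show ?thesis using s by blast
qed

definition bld :: "nat \<Rightarrow> (nat \<Rightarrow> nat) \<Rightarrow> nat \<Rightarrow> nat \<Rightarrow> nat \<Rightarrow> nat \<Rightarrow> int" where
  "bld n \<sigma> r c i j = (if i = r - 1 then (if j = c then 1 else 0)
     else if i = r then (if j = \<sigma> r \<or> j = \<sigma> (r - 1) then 1 else if j = c then -1 else 0)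
     else if 1 \<le> i \<and> i \<le> n \<and> j = \<sigma> i then 1 else 0)"

lemma bld_vals: "bld n \<sigma> r c i j \<in> {-1, 0, 1}"
  unfolding bld_def by (cases "i = r - 1"; cases "i = r"; simp)

locale bs =
  fixes n :: nat and \<sigma> :: "nat \<Rightarrow> nat" and r c r0 :: nat
  assumes r0: "r = Suc r0" and perm: "\<sigma> permutes {1..n}" and r2: "2 \<le> r" and rn: "r \<le> n"
    and pc: "\<sigma> r < c" and cq: "c < \<sigma> (r0)" and cS: "c \<in> \<sigma> ` {r<..n}"
begin

abbreviation "N \<equiv> bld n \<sigma> r c"

lemma rm1[simp]: "r - 1 = r0" "r - Suc 0 = r0" "r0 \<noteq> r" "r \<noteq> r0" "r0 < r"
  using r0 by auto
abbreviation "p \<equiv> \<sigma> r"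
abbreviation "q \<equiv> \<sigma> (r0)"

lemma inj: "\<sigma> i = \<sigma> i' \<longleftrightarrow> i = i'"
  using permutes_inj[OF perm] by (auto simp: inj_def)

lemma rng: "\<sigma> i \<in> {1..n} \<longleftrightarrow> i \<in> {1..n}"
  using permutes_in_image[OF perm] by blast

lemma surj: "j \<in> {1..n} \<Longrightarrow> \<exists>t\<in>{1..n}. \<sigma> t = j"
  using permutes_image[OF perm] by (metis imageE)

lemma sfacts: "1 \<le> p" "p \<le> n" "1 \<le> q" "q \<le> n" "1 \<le> c" "c \<le> n" "p < q" "r0 \<ge> 1" "r0 < r"
  using rng[of r] rng[of "r0"] r0 r2 rn pc cq by auto

lemma obtain_s: obtains s where "r < s" "s \<le> n" "\<sigma> s = c"
  using cS by auto

lemma N_rm1: "N (r0) j = (if j = c then 1 else 0)"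
  by (simp add: bld_def)

lemma N_rm1c: "i = r0 \<Longrightarrow> N i j = (if j = c then 1 else 0)"
  by (simp add: bld_def)

lemma N_r: "N r j = (if j = p \<or> j = q then 1 else if j = c then -1 else 0)"
proof -
  have "r \<noteq> r0" by simp
  then show ?thesis by (simp add: bld_def)
qed

lemma N_oth: "i \<noteq> r0 \<Longrightarrow> i \<noteq> r \<Longrightarrow> N i j = (if 1 \<le> i \<and> i \<le> n \<and> j = \<sigma> i then 1 else 0)"
  by (simp add: bld_def)

lemma N_asm: "is_asm n N"
  unfolding is_asm_def
proof (intro conjI ballI allI impI)
  fix i j show "N i j \<in> {-1, 0, 1}" by (rule bld_vals)
next
  fix i j assume a: "i \<notin> {1..n} \<or> j \<notin> {1..n}"
  show "N i j = 0"
  proof (cases "i = r0")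
    case True then show ?thesis using a sfacts rn by (auto simp: N_rm1c)
  next
    case f1: False show ?thesis
    proof (cases "i = r")
      case True then show ?thesis using a sfacts rn by (auto simp: N_r)
    next
      case False then show ?thesis using a f1 rng[of i] by (auto simp: N_oth)
    qed
  qed
next
  fix i assume i: "i \<in> {1..n}"
  show "alternating [N i j. j \<leftarrow> [1..<n+1], N i j \<noteq> 0]"
  proof (cases "i = r0")
    case True then show ?thesis by (intro alt_single[of c]) (use sfacts in \<open>auto simp: N_rm1c\<close>)
  next
    case f1: False show ?thesis
    proof (cases "i = r")
      case True then show ?thesis
        by (intro alt_triple[of p c q]) (use sfacts pc cq in \<open>auto simp: N_r\<close>)
    next
      case False then show ?thesis
        by (intro alt_single[of "\<sigma> i"]) (use f1 i rng[of i] in \<open>auto simp: N_oth\<close>)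
    qed
  qed
next
  fix j assume j: "j \<in> {1..n}"
  show "alternating [N i j. i \<leftarrow> [1..<n+1], N i j \<noteq> 0]"
  proof (cases "j = c")
    case True
    obtain s where s: "r < s" "s \<le> n" "\<sigma> s = c" by (rule obtain_s)
    have z: "\<forall>i\<in>{1..n}. i \<noteq> r0 \<and> i \<noteq> r \<and> i \<noteq> s \<longrightarrow> N i c = 0"
    proof (intro ballI impI)
      fix i assume "i \<in> {1..n}" "i \<noteq> r0 \<and> i \<noteq> r \<and> i \<noteq> s"
      then have "c \<noteq> \<sigma> i" using s(3) inj[of s i] by auto
      then show "N i c = 0" using \<open>i \<noteq> r0 \<and> i \<noteq> r \<and> i \<noteq> s\<close> N_oth by simp
    qed
    have e1: "N (r0) c = 1" by (simp add: N_rm1c)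
    have e2: "N r c = -1" using pc cq by (simp add: N_r)
    have sr: "s \<noteq> r0" "s \<noteq> r" using s r0 by auto
    have e3: "N s c = 1" using s sfacts N_oth[OF sr, of c] by simp
    show ?thesis unfolding True
      by (rule alt_triple[of "r0" r s, OF _ _ _ _ e1 e2 e3 z]) (use s sfacts in simp_all)
  next
    case jc: False
    show ?thesis
    proof (cases "j = q")
      case True
      have z: "\<forall>i\<in>{1..n}. i \<noteq> r \<longrightarrow> N i j = 0"
      proof (intro ballI impI)
        fix i assume "i \<in> {1..n}" "i \<noteq> r"
        show "N i j = 0"
        proof (cases "i = r0")
          case True then show ?thesis using jc by (simp add: N_rm1c)
        next
          case False
          then have "j \<noteq> \<sigma> i" using \<open>j = q\<close> inj[of "r0" i] by auto
          then show ?thesis using False \<open>i \<noteq> r\<close> N_oth by simp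
        qed
      qed
      have e: "N r j = 1" using True by (simp add: N_r)
      show ?thesis by (rule alt_single[of r, OF _ e z]) (use rn r2 in simp)
    next
      case jq: False
      obtain t where t: "t \<in> {1..n}" "\<sigma> t = j" using surj[OF j] by blast
      have tr1: "t \<noteq> r0" using t jq by auto
      have e: "N t j = 1"
      proof (cases "t = r")
        case True then show ?thesis using t by (simp add: N_r)
      next
        case False then show ?thesis using t tr1 N_oth by simp
      qed
      have z: "\<forall>i\<in>{1..n}. i \<noteq> t \<longrightarrow> N i j = 0"
      proof (intro ballI impI)
        fix i assume i: "i \<in> {1..n}" "i \<noteq> t"
        have ji: "j \<noteq> \<sigma> i" using t i inj[of t i] by auto
        show "N i j = 0"
        proof (cases "i = r0")
          case True then show ?thesis using jc by (simp add: N_rm1c)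
        next
          case f1: False show ?thesis
          proof (cases "i = r")
            case True then show ?thesis using jc jq ji by (simp add: N_r)
          next
            case False then show ?thesis using f1 ji N_oth by simp
          qed
        qed
      qed
      show ?thesis by (rule alt_single[of t, OF t(1) e z])
    qed
  qed
qed

lemma neg_set: "{(i, j). i \<in> {1..n} \<and> j \<in> {1..n} \<and> N i j = -1} = {(r, c)}"
proof
  show "{(i, j). i \<in> {1..n} \<and> j \<in> {1..n} \<and> N i j = -1} \<subseteq> {(r, c)}"
  proof
    fix x assume x: "x \<in> {(i, j). i \<in> {1..n} \<and> j \<in> {1..n} \<and> N i j = -1}"
    obtain i j where ij: "x = (i, j)" by (cases x)
    have N: "N i j = -1" using x ij by simp
    have "i = r"
    proof (rule ccontr)
      assume nr: "i \<noteq> r"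
      show False
      proof (cases "i = r0")
        case True
        have "N i j \<noteq> -1" unfolding True N_rm1 by simp
        then show False using N by simp
      next
        case False
        have "N i j \<noteq> -1" unfolding N_oth[OF False nr] by simp
        then show False using N by simp
      qed
    qed
    have "j = c"
    proof (rule ccontr)
      assume "j \<noteq> c"
      then have "N r j \<noteq> -1" unfolding N_r by simp
      then show False using N \<open>i = r\<close> by simp
    qed
    then show "x \<in> {(r, c)}" using ij \<open>i = r\<close> by simp
  qed
  have "N r c = -1" unfolding N_r using pc cq by simp
  moreover have "r \<in> {1..n}" "c \<in> {1..n}" using sfacts rn r2 by auto
  ultimately show "{(r, c)} \<subseteq> {(i, j). i \<in> {1..n} \<and> j \<in> {1..n} \<and> N i j = -1}" by simp
qed

lemma N_one: "N \<in> asm_one n"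
  unfolding asm_one_def using N_asm neg_set by simp

lemma mp: "minus_pos n N = (r, c)"
  unfolding minus_pos_def
proof (rule the_equality)
  show "fst (r, c) \<in> {1..n} \<and> snd (r, c) \<in> {1..n} \<and> N (fst (r, c)) (snd (r, c)) = - 1"
    using sfacts rn r2 pc cq by (simp add: N_r)
  fix x assume "fst x \<in> {1..n} \<and> snd x \<in> {1..n} \<and> N (fst x) (snd x) = - 1"
  then have "x \<in> {(i, j). i \<in> {1..n} \<and> j \<in> {1..n} \<and> N i j = -1}" by (cases x) auto
  then have "x \<in> {(r, c)}" by (simp only: neg_set)
  then show "x = (r, c)" by simp
qed

lemma crow: "closing_row n N = r" unfolding closing_row_def mp by simp
lemma ocol: "opening_col n N = c" unfolding opening_col_def mp by simp

lemma orow: "opening_row n N = r0"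
  unfolding opening_row_def crow ocol
proof (rule the_equality)
  show "r0 < r \<and> N (r0) c = 1" using sfacts by (simp add: N_rm1c)
  fix i assume i: "i < r \<and> N i c = 1"
  show "i = r0"
  proof (rule ccontr)
    assume ne: "i \<noteq> r0"
    then have "c = \<sigma> i" "i \<in> {1..n}" using i N_oth[of i c] by (auto split: if_splits)
    obtain s where s: "r < s" "s \<le> n" "\<sigma> s = c" by (rule obtain_s)
    then have "i = s" using \<open>c = \<sigma> i\<close> inj by metis
    then show False using i s by simp
  qed
qed

lemma ccol: "closing_col n N = q"
  unfolding closing_col_def crow ocol
proof (rule the_equality)
  show "c < q \<and> N r q = 1" using cq by (simp add: N_r)
  fix j assume "c < j \<and> N r j = 1"
  then show "j = q" using pc by (auto simp: N_r split: if_splits)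
qed

lemma N_neutral: "N \<in> asm_one_neutral n"
  unfolding asm_one_neutral_def neutral_def using N_one crow orow r0 by simp

lemma lrow: "leading_row n N = r"
  unfolding leading_row_def orow ocol
proof (rule Least_equality)
  show "r0 < r \<and> (\<exists>j<c. N r j = 1)" using sfacts pc by (auto simp: N_r)
  fix y assume "r0 < y \<and> (\<exists>j<c. N y j = 1)"
  then show "r \<le> y" using r0 by simp
qed

lemma lcol: "leading_col n N = p"
  unfolding leading_col_def lrow ocol
proof (rule the_equality)
  show "p < c \<and> N r p = 1" using pc by (simp add: N_r)
  fix j assume "j < c \<and> N r j = 1"
  then show "j = p" using cq by (auto simp: N_r split: if_splits)
qed

lemma onecol: "R \<in> {1..n} \<Longrightarrow> one_col n N R = (if R = r0 then c else \<sigma> R)"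
proof -
  assume R: "R \<in> {1..n}"
  show ?thesis
  proof (cases "R = r")
    case True
    have "(LEAST j. N r j = 1) = p"
    proof (rule Least_equality)
      show "N r p = 1" by (simp add: N_r)
      fix y assume "N r y = 1" then show "p \<le> y" using sfacts by (auto simp: N_r split: if_splits)
    qed
    then show ?thesis unfolding one_col_def crow using True sfacts by simp
  next
    case nr: False
    show ?thesis
    proof (cases "R = r0")
      case True
      have "(THE j. N R j = 1) = c" by (rule the_equality) (auto simp: True N_rm1c split: if_splits)
      then show ?thesis unfolding one_col_def crow using True nr by simp
    next
      case False
      have "(THE j. N R j = 1) = \<sigma> R"
        by (rule the_equality) (use False nr R in \<open>auto simp: N_oth split: if_splits\<close>)
      then show ?thesis unfolding one_col_def crow using False nr by simp
    qed
  qed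
qed

lemma sum_bool_card: "finite A \<Longrightarrow> (\<Sum>i\<in>A. if P i then 1 else 0 :: int) = int (card {i\<in>A. P i})"
  by (simp add: sum.If_cases Int_def)

lemma rowsum_oth: "R' \<noteq> r0 \<Longrightarrow> R' \<noteq> r \<Longrightarrow> R' \<in> {1..n} \<Longrightarrow> finite J \<Longrightarrow>
   (\<Sum>j\<in>J. N R' j) = (if \<sigma> R' \<in> J then 1 else 0)"
proof -
  assume a: "R' \<noteq> r0" "R' \<noteq> r" "R' \<in> {1..n}" "finite J"
  have "(\<Sum>j\<in>J. N R' j) = (\<Sum>j\<in>J. if j = \<sigma> R' then 1 else 0)"
    using a by (intro sum.cong) (auto simp: N_oth)
  also have "\<dots> = (if \<sigma> R' \<in> J then 1 else 0)" using a(4) by (simp add: sum.delta)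
  finally show ?thesis .
qed

lemma rowsum_r: "finite J \<Longrightarrow>
   (\<Sum>j\<in>J. N r j) = (if p \<in> J then 1 else 0) + (if q \<in> J then 1 else 0) - (if c \<in> J then 1 else 0)"
proof -
  assume fJ: "finite J"
  have "(\<Sum>j\<in>J. N r j) = (\<Sum>j\<in>J. (if j = p then 1 else 0) + (if j = q then 1 else 0) - (if j = c then 1 else 0))"
    using sfacts pc cq by (intro sum.cong) (auto simp: N_r)
  also have "\<dots> = (if p \<in> J then 1 else 0) + (if q \<in> J then 1 else 0) - (if c \<in> J then 1 else 0)"
    using fJ by (simp add: sum.distrib sum_subtractf sum.delta)
  finally show ?thesis .
qed

lemma rowsum_rm1: "finite J \<Longrightarrow> (\<Sum>j\<in>J. N (r0) j) = (if c \<in> J then 1 else 0)"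
  by (simp add: N_rm1c sum.delta)

lemma ell_val: "ell n N = int (card {i\<in>{r<..n}. p < \<sigma> i \<and> \<sigma> i < c})"
proof -
  have e: "{r0<..n} = insert r {r<..n}" using r0 rn by auto
  have "ell n N = (\<Sum>i\<in>{r0<..n}. \<Sum>j\<in>{p<..<c}. N i j)"
    unfolding ell_def orow lcol ocol ..
  also have "\<dots> = (\<Sum>j\<in>{p<..<c}. N r j) + (\<Sum>i\<in>{r<..n}. \<Sum>j\<in>{p<..<c}. N i j)"
    unfolding e by (simp add: sum.insert)
  also have "(\<Sum>j\<in>{p<..<c}. N r j) = 0" using cq by (simp add: rowsum_r)
  also have "(\<Sum>i\<in>{r<..n}. \<Sum>j\<in>{p<..<c}. N i j) = (\<Sum>i\<in>{r<..n}. if p < \<sigma> i \<and> \<sigma> i < c then 1 else 0)"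
  proof (rule sum.cong[OF refl])
    fix x assume x: "x \<in> {r<..n}"
    then have "x \<noteq> r0" "x \<noteq> r" "x \<in> {1..n}" using r0 by auto
    from rowsum_oth[OF this, of "{p<..<c}"] show "(\<Sum>j\<in>{p<..<c}. N x j) = (if p < \<sigma> x \<and> \<sigma> x < c then 1 else 0)"
      by simp
  qed
  also have "\<dots> = int (card {i\<in>{r<..n}. p < \<sigma> i \<and> \<sigma> i < c})" by (rule sum_bool_card) simp
  finally show ?thesis by simp
qed

lemma cN_val: "cN n N = int (card {i\<in>{r<..n}. c < \<sigma> i \<and> \<sigma> i < q})"
proof -
  have "cN n N = (\<Sum>i\<in>{r<..n}. \<Sum>j\<in>{c<..<q}. N i j)"
    unfolding cN_def crow ocol ccol ..
  also have "\<dots> = (\<Sum>i\<in>{r<..n}. if c < \<sigma> i \<and> \<sigma> i < q then 1 else 0)"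
  proof (rule sum.cong[OF refl])
    fix x assume x: "x \<in> {r<..n}"
    then have "x \<noteq> r0" "x \<noteq> r" "x \<in> {1..n}" using r0 by auto
    from rowsum_oth[OF this, of "{c<..<q}"] show "(\<Sum>j\<in>{c<..<q}. N x j) = (if c < \<sigma> x \<and> \<sigma> x < q then 1 else 0)"
      by simp
  qed
  also have "\<dots> = int (card {i\<in>{r<..n}. c < \<sigma> i \<and> \<sigma> i < q})" by (rule sum_bool_card) simp
  finally show ?thesis .
qed

definition corr :: "nat \<Rightarrow> nat \<Rightarrow> int" where
  "corr J R' = (if R' = r0 then (if c < J then 1 else 0) - (if q < J then 1 else 0) else 0) +
     (if R' = r then (if q < J then 1 else 0) - (if c < J then 1 else 0) else 0)"

lemma rowsum_gen: "R' \<in> {1..n} \<Longrightarrow> (\<Sum>j\<in>{1..<J}. N R' j) = (if \<sigma> R' < J then 1 else 0) + corr J R'"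
proof -
  assume R': "R' \<in> {1..n}"
  have rr: "r0 \<noteq> r" by simp
  show ?thesis
  proof (cases "R' = r0")
    case True then show ?thesis using rr sfacts by (simp add: rowsum_rm1 corr_def)
  next
    case f: False show ?thesis
    proof (cases "R' = r")
      case True then show ?thesis using rr sfacts by (simp add: rowsum_r corr_def)
    next
      case False
      have "1 \<le> \<sigma> R'" using rng[of R'] R' by simp
      then show ?thesis using f False R' by (simp add: rowsum_oth corr_def)
    qed
  qed
qed

lemma corr_sum: "finite A \<Longrightarrow> (\<Sum>R'\<in>A. corr J R') =
   (if r0 \<in> A then (if c < J then 1 else 0) - (if q < J then 1 else 0) else 0) +
   (if r \<in> A then (if q < J then 1 else 0) - (if c < J then 1 else 0) else 0)"
proof -
  assume fA: "finite A"
  define X :: int where "X = (if c < J then 1 else 0) - (if q < J then 1 else 0)"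
  define Y :: int where "Y = (if q < J then 1 else 0) - (if c < J then 1 else 0)"
  have "(\<Sum>R'\<in>A. corr J R') = (\<Sum>R'\<in>A. (if R' = r0 then X else 0) + (if R' = r then Y else 0))"
    unfolding corr_def X_def Y_def ..
  also have "\<dots> = (\<Sum>R'\<in>A. if R' = r0 then X else 0) + (\<Sum>R'\<in>A. if R' = r then Y else 0)"
    by (rule sum.distrib)
  also have "\<dots> = (if r0 \<in> A then X else 0) + (if r \<in> A then Y else 0)"
    by (simp only: sum.delta[OF fA])
  finally show ?thesis unfolding X_def Y_def .
qed

lemma Q_val: "R \<le> n \<Longrightarrow> (\<Sum>R'\<in>{R<..n}. \<Sum>j\<in>{1..<J}. N R' j) =
   int (card {R'\<in>{R<..n}. \<sigma> R' < J}) +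
   (if R = r0 then (if q < J then 1 else 0) - (if c < J then 1 else 0) else 0)"
proof -
  assume Rn: "R \<le> n"
  have "(\<Sum>R'\<in>{R<..n}. \<Sum>j\<in>{1..<J}. N R' j) = (\<Sum>R'\<in>{R<..n}. (if \<sigma> R' < J then 1 else 0) + corr J R')"
    by (intro sum.cong refl rowsum_gen) auto
  also have "\<dots> = int (card {R'\<in>{R<..n}. \<sigma> R' < J}) + (\<Sum>R'\<in>{R<..n}. corr J R')"
    by (simp add: sum.distrib sum_bool_card)
  also have "(\<Sum>R'\<in>{R<..n}. corr J R') =
     (if R = r0 then (if q < J then 1 else 0) - (if c < J then 1 else 0) else 0)"
  proof -
    have cs: "(\<Sum>R'\<in>{R<..n}. corr J R') =
      (if r0 \<in> {R<..n} then (if c < J then 1 else 0) - (if q < J then 1 else 0) else 0) +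
      (if r \<in> {R<..n} then (if q < J then 1 else 0) - (if c < J then 1 else 0) else 0)"
      by (rule corr_sum) simp
    have rn': "r0 < n" using r0 rn by simp
    show ?thesis
    proof (cases "R = r0")
      case True
      then have "r0 \<notin> {R<..n}" "r \<in> {R<..n}" using r0 rn by auto
      then show ?thesis using cs True by simp
    next
      case False
      show ?thesis
      proof (cases "R < r0")
        case True
        then have "r0 \<in> {R<..n}" "r \<in> {R<..n}" using r0 rn by auto
        then show ?thesis using cs False by simp
      next
        case f2: False
        then have "r0 \<notin> {R<..n}" "r \<notin> {R<..n}" using r0 False by auto
        then show ?thesis using cs False by simp
      qed
    qed
  qed
  finally show ?thesis .
qed

definition Aval :: "nat \<Rightarrow> nat" where
  "Aval R = (if R = r0 then card {R'\<in>{r0<..n}. \<sigma> R' < c} else code n \<sigma> R)"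

lemma a_val: "i \<in> {1..n} \<Longrightarrow> a_entry n N i = int (Aval (n + 1 - i))"
proof -
  assume i: "i \<in> {1..n}"
  define R where "R = n + 1 - i"
  have R: "R \<in> {1..n}" using i R_def by auto
  have "a_entry n N i = (\<Sum>R'\<in>{R<..n}. \<Sum>j\<in>{1..<one_col n N R}. N R' j)"
    unfolding a_entry_def R_def ..
  also have "\<dots> = int (Aval R)"
  proof (cases "R = r0")
    case True
    have Rn: "R \<le> n" using R by simp
    show ?thesis using Q_val[OF Rn, of c] onecol[OF R] True cq by (simp add: Aval_def)
  next
    case False
    have "{R'\<in>{R<..n}. \<sigma> R' < \<sigma> R} = {R'. R < R' \<and> R' \<le> n \<and> \<sigma> R' < \<sigma> R}" by auto
    moreover have Rn: "R \<le> n" using R by simp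
    ultimately show ?thesis using Q_val[OF Rn, of "\<sigma> R"] onecol[OF R] False by (simp add: Aval_def code_def)
  qed
  finally show ?thesis unfolding R_def .
qed

end

lemma asm_alt_row: "is_asm n A \<Longrightarrow> i \<in> {1..n} \<Longrightarrow> alternating (map (A i) (filter (\<lambda>j. A i j \<noteq> 0) [1..<n+1]))"
  unfolding is_asm_def LC by blast

lemma asm_alt_col: "is_asm n A \<Longrightarrow> j \<in> {1..n} \<Longrightarrow>
   alternating (map (\<lambda>i. A i j) (filter (\<lambda>i. A i j \<noteq> 0) [1..<n+1]))"
  unfolding is_asm_def LC by blast

lemma struct:
  assumes NN: "A \<in> asm_one_neutral n"
  shows "\<exists>\<sigma> r c r0. bs n \<sigma> r c r0 \<and> A = bld n \<sigma> r c"
proof -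
  have asm: "is_asm n A" and c1: "card {(i, j). i \<in> {1..n} \<and> j \<in> {1..n} \<and> A i j = -1} = 1"
    and neu: "neutral n A"
    using NN unfolding asm_one_neutral_def asm_one_def by auto
  have out: "A i j = 0" if "i \<notin> {1..n} \<or> j \<notin> {1..n}" for i j
    using asm that unfolding is_asm_def by blast
  have vals: "A i j \<in> {-1, 0, 1}" for i j using asm unfolding is_asm_def by blast
  obtain rc where rc: "{(i, j). i \<in> {1..n} \<and> j \<in> {1..n} \<and> A i j = -1} = {rc}"
    using c1 card_1_singletonE by blast
  obtain r c where rcd: "rc = (r, c)" by (cases rc)
  have rcin: "r \<in> {1..n}" "c \<in> {1..n}" "A r c = -1" using rc rcd by blast+
  have uniq: "i = r \<and> j = c" if "i \<in> {1..n}" "j \<in> {1..n}" "A i j = -1" for i j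
  proof -
    have "(i, j) \<in> {(i, j). i \<in> {1..n} \<and> j \<in> {1..n} \<and> A i j = -1}" using that by simp
    then have "(i, j) \<in> {rc}" by (simp only: rc)
    then show ?thesis using rcd by simp
  qed
  have nm1: "A i j \<noteq> -1" if "i \<noteq> r \<or> j \<noteq> c" for i j
  proof
    assume a: "A i j = -1"
    then have "i \<in> {1..n}" "j \<in> {1..n}" using out[of i j] by force+
    then show False using uniq a that by blast
  qed
  have mp: "minus_pos n A = (r, c)"
    unfolding minus_pos_def
  proof (rule the_equality)
    show "fst (r, c) \<in> {1..n} \<and> snd (r, c) \<in> {1..n} \<and> A (fst (r, c)) (snd (r, c)) = - 1"
      using rcin by simp
    fix x assume "fst x \<in> {1..n} \<and> snd x \<in> {1..n} \<and> A (fst x) (snd x) = - 1"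
    then show "x = (r, c)" using uniq by (cases x) auto
  qed
  have crow: "closing_row n A = r" and ocol: "opening_col n A = c"
    unfolding closing_row_def opening_col_def mp by simp_all
  have row1: "\<exists>j0. j0 \<in> {1..n} \<and> A i j0 = 1 \<and> (\<forall>j\<in>{1..n}. j \<noteq> j0 \<longrightarrow> A i j = 0)"
    if "i \<in> {1..n}" "i \<noteq> r" for i
    by (rule line_one[OF asm_alt_row[OF asm that(1)]]) (use nm1 that in auto)
  obtain p q where pq: "1 \<le> p" "p < c" "c < q" "q \<le> n" "A r p = 1" "A r q = 1"
    "\<forall>j\<in>{1..n}. j \<noteq> p \<and> j \<noteq> c \<and> j \<noteq> q \<longrightarrow> A r j = 0"
    using line_three[OF asm_alt_row[OF asm rcin(1)] rcin(2) rcin(3)] nm1 by blast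
  have col1: "\<exists>t. t \<in> {1..n} \<and> A t j = 1 \<and> (\<forall>i\<in>{1..n}. i \<noteq> t \<longrightarrow> A i j = 0)"
    if "j \<in> {1..n}" "j \<noteq> c" for j
    by (rule line_one[where v="\<lambda>i. A i j", OF asm_alt_col[OF asm that(1)]]) (use nm1 that in auto)
  obtain o' s where os: "1 \<le> o'" "o' < r" "r < s" "s \<le> n" "A o' c = 1" "A s c = 1"
    "\<forall>i\<in>{1..n}. i \<noteq> o' \<and> i \<noteq> r \<and> i \<noteq> s \<longrightarrow> A i c = 0"
    using line_three[where v="\<lambda>i. A i c", OF asm_alt_col[OF asm rcin(2)] rcin(1) rcin(3)] nm1 by blast
  have orow: "opening_row n A = o'"
    unfolding opening_row_def crow ocol
  proof (rule the_equality)
    show "o' < r \<and> A o' c = 1" using os by simp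
    fix i assume i: "i < r \<and> A i c = 1"
    then have "i \<in> {1..n}" using out[of i c] by fastforce
    then show "i = o'" using i os by fastforce
  qed
  have r0: "r = Suc o'" using neu orow crow unfolding neutral_def by simp
  have rowo: "A o' j = (if j = c then 1 else 0)" for j
  proof -
    have o'in: "o' \<in> {1..n}" "o' \<noteq> r" using os rcin by auto
    obtain j0 where j0: "j0 \<in> {1..n}" "A o' j0 = 1" "\<forall>j\<in>{1..n}. j \<noteq> j0 \<longrightarrow> A o' j = 0"
      using row1[OF o'in] by blast
    have "j0 = c" using j0 os(5) rcin(2) by fastforce
    then show ?thesis using j0 out[of o' j] by (cases "j \<in> {1..n}") auto
  qed
  have rowr: "A r j = (if j = p \<or> j = q then 1 else if j = c then -1 else 0)" for j
  proof (cases "j \<in> {1..n}")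
    case True then show ?thesis using pq rcin by auto
  next
    case False then show ?thesis using out[of r j] pq rcin by auto
  qed
  define f where "f i = (THE j. A i j = 1)" for i
  have f: "f i \<in> {1..n} \<and> A i (f i) = 1 \<and> (\<forall>j. j \<noteq> f i \<longrightarrow> A i j = 0)"
    if iin: "i \<in> {1..n}" "i \<noteq> r" for i
  proof -
    obtain j0 where j0: "j0 \<in> {1..n}" "A i j0 = 1" "\<forall>j\<in>{1..n}. j \<noteq> j0 \<longrightarrow> A i j = 0"
      using row1[OF iin] by blast
    have z: "\<forall>j. j \<noteq> j0 \<longrightarrow> A i j = 0" using j0(3) out by blast
    have "f i = j0" unfolding f_def
      by (rule the_equality) (use j0 z in force)+
    then show ?thesis using j0 z by simp
  qed
  define \<sigma> where "\<sigma> i = (if i = o' then q else if i = r then p else if i \<in> {1..n} then f i else i)" for i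
  have so: "\<sigma> o' = q" and sr: "\<sigma> r = p" using r0 unfolding \<sigma>_def by auto
  have soth: "\<sigma> i = f i" if "i \<noteq> o'" "i \<noteq> r" "i \<in> {1..n}" for i using that unfolding \<sigma>_def by simp
  have srng: "\<sigma> i \<in> {1..n}" if "i \<in> {1..n}" for i
    using that f[of i] pq so sr soth[of i] by (cases "i = o'"; cases "i = r") auto
  have one: "A i (\<sigma> i) = 1" if "i \<in> {1..n}" "i \<noteq> o'" for i
    using that f[of i] pq sr soth[of i] by (cases "i = r") auto
  have colu: "i = i'" if cu: "i \<in> {1..n}" "i' \<in> {1..n}" "A i j = 1" "A i' j = 1" "j \<noteq> c" for i i' j
  proof -
    have j: "j \<in> {1..n}" using cu out[of i j] by fastforce
    obtain t where t: "t \<in> {1..n}" "A t j = 1" "\<forall>i\<in>{1..n}. i \<noteq> t \<longrightarrow> A i j = 0"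
      using col1[OF j cu(5)] by blast
    have "i = t"
    proof (rule ccontr)
      assume "i \<noteq> t" then have "A i j = 0" using t(3) cu(1) by blast
      then show False using cu(3) by simp
    qed
    moreover have "i' = t"
    proof (rule ccontr)
      assume "i' \<noteq> t" then have "A i' j = 0" using t(3) cu(2) by blast
      then show False using cu(4) by simp
    qed
    ultimately show ?thesis by simp
  qed
  have inj: "inj_on \<sigma> {1..n}"
  proof (rule inj_onI)
    fix i i' assume i: "i \<in> {1..n}" and i': "i' \<in> {1..n}" and e: "\<sigma> i = \<sigma> i'"
    show "i = i'"
    proof (cases "i = o'")
      case True
      show ?thesis
      proof (rule ccontr)
        assume ne: "i \<noteq> i'"
        then have "i' \<noteq> o'" using True by simp
        then have "A i' q = 1" using one[OF i'] e True so by simp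
        then have "i' = r" using colu[OF i' rcin(1) _ pq(6)] pq(3) by simp
        then show False using e True so sr pq by simp
      qed
    next
      case f1: False
      show ?thesis
      proof (cases "i' = o'")
        case True
        show ?thesis
        proof (rule ccontr)
          assume ne: "i \<noteq> i'"
          have "A i q = 1" using one[OF i f1] e True so by simp
          then have "i = r" using colu[OF i rcin(1) _ pq(6)] pq(3) by simp
          then show False using e True so sr pq by simp
        qed
      next
        case False
        have a1: "A i (\<sigma> i) = 1" using one[OF i f1] .
        have a2: "A i' (\<sigma> i) = 1" using one[OF i' False] e by simp
        show ?thesis
        proof (cases "\<sigma> i = c")
          case True
          have "i \<noteq> r" "i' \<noteq> r" using a1 a2 True rcin by auto
          then have "i = s" "i' = s" using a1 a2 True os f1 False i i' by fastforce+
          then show ?thesis by simp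
        next
          case False
          then show ?thesis using colu[OF i i' a1 a2] by simp
        qed
      qed
    qed
  qed
  have "\<sigma> ` {1..n} \<subseteq> {1..n}" using srng by blast
  then have img: "\<sigma> ` {1..n} = {1..n}" using endo_inj_surj[of "{1..n}" \<sigma>] inj by blast
  have perm: "\<sigma> permutes {1..n}"
  proof (rule bij_imp_permutes)
    show "bij_betw \<sigma> {1..n} {1..n}" using inj img by (simp add: bij_betw_def)
    fix x assume "x \<notin> {1..n}"
    then show "\<sigma> x = x" using os rcin unfolding \<sigma>_def by auto
  qed
  have ss: "\<sigma> s = c"
  proof -
    have s: "s \<in> {1..n}" "s \<noteq> o'" "s \<noteq> r" using os r0 by auto
    have "A s (\<sigma> s) = 1" using one[OF s(1,2)] .
    moreover have "\<forall>j. j \<noteq> f s \<longrightarrow> A s j = 0" using f[OF s(1,3)] by blast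
    ultimately show ?thesis
    proof -
      assume z: "\<forall>j. j \<noteq> f s \<longrightarrow> A s j = 0"
      have "c = f s"
      proof (rule ccontr)
        assume "c \<noteq> f s" then have "A s c = 0" using z by blast
        then show False using os(6) by simp
      qed
      then show ?thesis using soth[OF s(2,3,1)] by simp
    qed
  qed
  have B: "bs n \<sigma> r c o'"
    unfolding bs_def
  proof (intro conjI)
    show "r = Suc o'" by (rule r0)
    show "\<sigma> permutes {1..n}" by (rule perm)
    show "2 \<le> r" using r0 os by simp
    show "r \<le> n" using rcin by simp
    show "\<sigma> r < c" using sr pq by simp
    show "c < \<sigma> o'" using so pq by simp
    show "c \<in> \<sigma> ` {r<..n}" using ss os by auto
  qed
  have "A = bld n \<sigma> r c"
  proof (intro ext)
    fix i j
    show "A i j = bld n \<sigma> r c i j"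
    proof (cases "i = o'")
      case True then show ?thesis using rowo r0 by (simp add: bld_def)
    next
      case f1: False
      show ?thesis
      proof (cases "i = r")
        case True then show ?thesis using rowr r0 sr so by (simp add: bld_def)
      next
        case False
        have "r - 1 = o'" using r0 by simp
        then have b: "bld n \<sigma> r c i j = (if 1 \<le> i \<and> i \<le> n \<and> j = \<sigma> i then 1 else 0)"
          using f1 False by (simp add: bld_def)
        show ?thesis
        proof (cases "i \<in> {1..n}")
          case True
          have "A i j = (if j = \<sigma> i then 1 else 0)"
            using f[OF True False] soth[OF f1 False True] by auto
          then show ?thesis using b True by simp
        next
          case ni: False
          then show ?thesis using b out[of i j] by auto
        qed
      qed
    qed
  qed
  then show ?thesis using B by blast
qed

lemma rk_lt_card: "finite S \<Longrightarrow> x \<in> S \<Longrightarrow> rk S x < card S"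
  unfolding rk_def by (rule psubset_card_mono) auto

lemma rk_surj: assumes "finite S" "m < card S" shows "\<exists>x\<in>S. rk S x = m"
proof -
  have inj: "inj_on (rk S) S" using rk_inj[OF assms(1)] by (auto simp: inj_on_def)
  have sub: "rk S ` S \<subseteq> {0..<card S}" using rk_lt_card[OF assms(1)] by auto
  have "card (rk S ` S) = card {0..<card S}" using card_image[OF inj] by simp
  then have "rk S ` S = {0..<card S}" using sub by (intro card_subset_eq) auto
  then show ?thesis using assms(2) by (metis atLeastLessThan_iff imageE zero_le)
qed

context bs
begin

definition S where "S = \<sigma> ` {r<..n}"

lemma finS: "finite S" unfolding S_def by simp

lemma cardS: "card S = n - r"
proof -
  have "inj_on \<sigma> {r<..n}" using inj by (auto simp: inj_on_def)
  then show ?thesis unfolding S_def by (simp add: card_image)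
qed

lemma cS': "c \<in> S" using cS unfolding S_def .
lemma pS: "p \<notin> S" unfolding S_def using inj by auto
lemma qS: "q \<notin> S" unfolding S_def using inj r0 by auto

lemma card_img: "card {i\<in>{r<..n}. P (\<sigma> i)} = card {y\<in>S. P y}"
proof -
  have "{y\<in>S. P y} = \<sigma> ` {i\<in>{r<..n}. P (\<sigma> i)}" unfolding S_def by auto
  moreover have "inj_on \<sigma> {i\<in>{r<..n}. P (\<sigma> i)}" using inj by (auto simp: inj_on_def)
  ultimately show ?thesis by (simp add: card_image)
qed

lemma r_lt_n: "r < n" using cS by auto

lemma code_r: "code n \<sigma> r = rk S p"
proof -
  have "{R'. r < R' \<and> R' \<le> n \<and> \<sigma> R' < p} = {i\<in>{r<..n}. \<sigma> i < p}" by auto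
  then show ?thesis unfolding code_def rk_def using card_img[of "\<lambda>y. y < p"] by simp
qed

lemma ins_r: "{i\<in>{r0<..n}. P (\<sigma> i)} = (if P p then insert r {i\<in>{r<..n}. P (\<sigma> i)} else {i\<in>{r<..n}. P (\<sigma> i)})"
proof (rule set_eqI)
  fix x
  show "x \<in> {i\<in>{r0<..n}. P (\<sigma> i)} \<longleftrightarrow> x \<in> (if P p then insert r {i\<in>{r<..n}. P (\<sigma> i)} else {i\<in>{r<..n}. P (\<sigma> i)})"
  proof (cases "x = r")
    case True then show ?thesis using r0 rn by auto
  next
    case False then show ?thesis using r0 rn by auto
  qed
qed

lemma Aval_r0: "Aval r0 = Suc (rk S c)"
proof -
  have "Aval r0 = card {R'\<in>{r0<..n}. \<sigma> R' < c}" unfolding Aval_def by simp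
  also have "\<dots> = Suc (card {i\<in>{r<..n}. \<sigma> i < c})" using ins_r[of "\<lambda>y. y < c"] pc by simp
  finally show ?thesis using card_img[of "\<lambda>y. y < c"] unfolding rk_def by simp
qed

lemma code_r0: "code n \<sigma> r0 = Suc (rk S q)"
proof -
  have "{R'. r0 < R' \<and> R' \<le> n \<and> \<sigma> R' < q} = {R'\<in>{r0<..n}. \<sigma> R' < q}" by auto
  then have "code n \<sigma> r0 = card {R'\<in>{r0<..n}. \<sigma> R' < q}" unfolding code_def by simp
  also have "\<dots> = Suc (card {i\<in>{r<..n}. \<sigma> i < q})" using ins_r[of "\<lambda>y. y < q"] sfacts by simp
  finally show ?thesis using card_img[of "\<lambda>y. y < q"] unfolding rk_def by simp
qed

lemma ell_rk: "ell n N = int (rk S c) - int (rk S p)"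
proof -
  have ne: "\<And>y. y \<in> S \<Longrightarrow> y \<noteq> p" using pS by blast
  have "{y\<in>S. y < c} = {y\<in>S. y < p} \<union> {y\<in>S. p < y \<and> y < c}" using ne pc by (auto simp: nat_neq_iff)
  moreover have "{y\<in>S. y < p} \<inter> {y\<in>S. p < y \<and> y < c} = {}" by auto
  ultimately have "rk S c = rk S p + card {y\<in>S. p < y \<and> y < c}"
    unfolding rk_def using finS by (simp add: card_Un_disjoint)
  then show ?thesis using ell_val card_img[of "\<lambda>y. p < y \<and> y < c"] by simp
qed

lemma cN_rk: "cN n N = int (rk S q) - int (rk S c) - 1"
proof -
  have "{y\<in>S. y < q} = {y\<in>S. y < c} \<union> insert c {y\<in>S. c < y \<and> y < q}" using cS' cq by auto
  moreover have "{y\<in>S. y < c} \<inter> insert c {y\<in>S. c < y \<and> y < q} = {}" by auto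
  ultimately have "rk S q = rk S c + Suc (card {y\<in>S. c < y \<and> y < q})"
    unfolding rk_def using finS by (simp add: card_Un_disjoint)
  then show ?thesis using cN_val card_img[of "\<lambda>y. c < y \<and> y < q"] by simp
qed

lemma Aval_le: "R \<in> {1..n} \<Longrightarrow> Aval R \<le> n - R"
proof -
  assume R: "R \<in> {1..n}"
  show ?thesis
  proof (cases "R = r0")
    case True
    have "card {R'\<in>{r0<..n}. \<sigma> R' < c} \<le> card {r0<..n}" by (rule card_mono) auto
    then show ?thesis using True unfolding Aval_def by simp
  next
    case False then show ?thesis using code_le unfolding Aval_def by simp
  qed
qed

lemma git_val: "git n (N, E) = (int n + 1 - int r0, map (a_entry n N) [1..<n+1], cN n N, E + ell n N)"
  unfolding git_def using orow by simp

lemma a_nth: "i < n \<Longrightarrow> map (a_entry n N) [1..<n+1] ! i = int (Aval (n - i))"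
proof -
  assume i: "i < n"
  have "map (a_entry n N) [1..<n+1] ! i = a_entry n N (Suc i)" using map_upt_nth[OF i] .
  also have "\<dots> = int (Aval (n + 1 - Suc i))" using a_val[of "Suc i"] i by simp
  finally show ?thesis by simp
qed

end

lemma fwd:
  fixes n :: nat and k b \<beta> :: int and a :: "int list"
  assumes NE: "(N, E) \<in> Nset n" and g: "git n (N, E) = (k, a, b, \<beta>)"
  shows "3 \<le> k \<and> k \<le> int n \<and>
            (\<forall>i\<in>{1..n}. 0 \<le> a ! (i - 1) \<and> a ! (i - 1) \<le> int i - 1) \<and>
            a ! (nat k - 2) < a ! (nat k - 1) \<and>
            a ! (nat k - 2) + \<beta> < a ! (nat k - 1) + b \<and>
            a ! (nat k - 1) + b \<le> k - 2"
proof -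
  have NN: "N \<in> asm_one_neutral n" and E1: "- ell n N \<le> E" and E2: "E \<le> cN n N"
    using NE unfolding Nset_def by auto
  obtain \<sigma> r c r0 where B: "bs n \<sigma> r c r0" and Nb: "N = bld n \<sigma> r c" using struct[OF NN] by blast
  interpret B: bs n \<sigma> r c r0 by (rule B)
  have gv: "k = int n + 1 - int r0" "a = map (a_entry n N) [1..<n+1]" "b = cN n N" "\<beta> = E + ell n N"
    using g B.git_val[of E] unfolding Nb by auto
  have rr: "r = Suc r0" "1 \<le> r0" "r < n" using B.r0 B.r2 B.r_lt_n by auto
  have nk: "nat k - 2 = n - r" "nat k - 1 = n - r0" using gv(1) rr by auto
  have ar: "a ! (n - r) = int (rk B.S (\<sigma> r))"
  proof -
    have "a ! (n - r) = int (B.Aval (n - (n - r)))" using gv(2) B.a_nth[of "n - r"] rr Nb by simp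
    also have "n - (n - r) = r" using rr by simp
    finally show ?thesis using B.code_r unfolding B.Aval_def by simp
  qed
  have ar0: "a ! (n - r0) = int (Suc (rk B.S c))"
  proof -
    have "a ! (n - r0) = int (B.Aval (n - (n - r0)))" using gv(2) B.a_nth[of "n - r0"] rr Nb by simp
    also have "n - (n - r0) = r0" using rr by simp
    finally show ?thesis using B.Aval_r0 by simp
  qed
  have ell: "ell n N = int (rk B.S c) - int (rk B.S (\<sigma> r))" using B.ell_rk Nb by simp
  have cn: "cN n N = int (rk B.S (\<sigma> (r0))) - int (rk B.S c) - 1" using B.cN_rk Nb by simp
  have mono: "rk B.S (\<sigma> r) \<le> rk B.S c" using rk_mono[OF B.finS] B.pc by simp
  have qle: "rk B.S (\<sigma> r0) \<le> n - r"
  proof -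
    have "rk B.S (\<sigma> r0) \<le> card B.S" unfolding rk_def using B.finS by (intro card_mono) auto
    then show ?thesis using B.cardS by simp
  qed
  have av: "0 \<le> a ! (i - 1) \<and> a ! (i - 1) \<le> int i - 1" if i: "i \<in> {1..n}" for i
  proof -
    define R where "R = n - (i - 1)"
    have ii: "i - 1 < n" using i by auto
    have Ri: "R \<in> {1..n}" "n - R = i - 1" using i unfolding R_def by auto
    have e: "a ! (i - 1) = int (B.Aval R)" unfolding gv(2) Nb R_def by (rule B.a_nth[OF ii])
    have "B.Aval R \<le> n - R" by (rule B.Aval_le[OF Ri(1)])
    then have "B.Aval R \<le> i - 1" using Ri(2) by simp
    moreover have "1 \<le> i" using i by simp
    ultimately have "int (B.Aval R) \<le> int i - 1" by (simp add: of_nat_diff[symmetric] del: of_nat_diff)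
    then show ?thesis using e by simp
  qed
  show ?thesis
    unfolding nk
    using rr gv(1,3,4) ar ar0 ell cn mono qle av E2 by auto
qed

lemma code_img: "inj \<sigma> \<Longrightarrow> code n \<sigma> R = rk (\<sigma> ` {R<..n}) (\<sigma> R)"
proof -
  assume i: "inj \<sigma>"
  have "{y\<in>\<sigma> ` {R<..n}. y < \<sigma> R} = \<sigma> ` {R'. R < R' \<and> R' \<le> n \<and> \<sigma> R' < \<sigma> R}" by auto
  moreover have "inj_on \<sigma> {R'. R < R' \<and> R' \<le> n \<and> \<sigma> R' < \<sigma> R}" using i by (auto simp: inj_on_def inj_def)
  ultimately show ?thesis unfolding code_def rk_def by (simp add: card_image)
qed

lemma rk_insert: "x \<notin> T \<Longrightarrow> finite T \<Longrightarrow> rk (insert x T) y = rk T y + (if x < y then 1 else 0)"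
proof -
  assume x: "x \<notin> T" and f: "finite T"
  show ?thesis
  proof (cases "x < y")
    case True
    then have "{z\<in>insert x T. z < y} = insert x {z\<in>T. z < y}" by auto
    then show ?thesis unfolding rk_def using x f True by simp
  next
    case False
    then have "{z\<in>insert x T. z < y} = {z\<in>T. z < y}" by auto
    then show ?thesis unfolding rk_def using False by simp
  qed
qed

lemma bwd:
  fixes n :: nat and k b \<beta> :: int and a :: "int list"
  assumes len: "length a = n" and nn: "\<forall>x\<in>set a. 0 \<le> x" and b0: "0 \<le> b" and \<beta>0: "0 \<le> \<beta>"
    and k3: "3 \<le> k" and kn: "k \<le> int n"
    and av: "\<forall>i\<in>{1..n}. 0 \<le> a ! (i - 1) \<and> a ! (i - 1) \<le> int i - 1"
    and c1: "a ! (nat k - 2) < a ! (nat k - 1)"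
    and c2: "a ! (nat k - 2) + \<beta> < a ! (nat k - 1) + b"
    and c3: "a ! (nat k - 1) + b \<le> k - 2"
  shows "\<exists>NE\<in>Nset n. git n NE = (k, a, b, \<beta>)"
proof -
  define r0 where "r0 = n + 1 - nat k"
  define r where "r = Suc r0"
  have kk: "k = int n + 1 - int r0" "1 \<le> r0" "r < n" "nat k - 2 = n - r" "nat k - 1 = n - r0"
    using k3 kn unfolding r0_def r_def by auto
  define ak1 where "ak1 = a ! (n - r)"
  define ak where "ak = a ! (n - r0)"
  have c1': "ak1 < ak" and c2': "ak1 + \<beta> < ak + b" and c3': "ak + b \<le> k - 2"
    using c1 c2 c3 kk unfolding ak1_def ak_def by simp_all
  have nth0: "0 \<le> a ! i" if "i < n" for i using nn len that by auto
  have ak10: "0 \<le> ak1" unfolding ak1_def using nth0 kk by simp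
  define g where "g R = (if R = r0 then nat (ak + b + 1) else nat (a ! (n - R)))" for R
  have gb: "\<forall>R\<in>{1..n}. g R \<le> n - R"
  proof
    fix R assume R: "R \<in> {1..n}"
    show "g R \<le> n - R"
    proof (cases "R = r0")
      case True
      have "ak + b + 1 \<le> int n - int r0" using c3' kk by simp
      then show ?thesis using True kk unfolding g_def by simp
    next
      case False
      define i where "i = n + 1 - R"
      have i: "i \<in> {1..n}" "i - 1 = n - R" using R unfolding i_def by auto
      have "a ! (i - 1) \<le> int i - 1" using av i by blast
      then have "a ! (n - R) \<le> int (n - R)" using i by simp
      then show ?thesis using False unfolding g_def by simp
    qed
  qed
  obtain \<sigma> where perm: "\<sigma> permutes {1..n}" and cd: "\<forall>R\<in>{1..n}. code n \<sigma> R = g R"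
    using code_surj[OF gb] by blast
  have injs: "inj \<sigma>" using permutes_inj[OF perm] .
  have rng: "\<sigma> i \<in> {1..n} \<longleftrightarrow> i \<in> {1..n}" for i using permutes_in_image[OF perm] by blast
  define S where "S = \<sigma> ` {r<..n}"
  have finS: "finite S" unfolding S_def by simp
  have cardS: "card S = n - r"
  proof -
    have "inj_on \<sigma> {r<..n}" using injs by (auto simp: inj_on_def inj_def)
    then show ?thesis unfolding S_def by (simp add: card_image)
  qed
  have pS: "\<sigma> r \<notin> S"
  proof
    assume "\<sigma> r \<in> S"
    then obtain x where x: "x \<in> {r<..n}" "\<sigma> r = \<sigma> x" unfolding S_def by auto
    then have "r = x" using injs by (simp add: inj_eq)
    then show False using x by simp
  qed
  have rr0: "r \<noteq> r0" "r0 < r" unfolding r_def by auto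
  have rin: "r \<in> {1..n}" "r0 \<in> {1..n}" using kk rr0 by auto
  have rkp: "rk S (\<sigma> r) = nat ak1"
  proof -
    have "code n \<sigma> r = rk S (\<sigma> r)" unfolding S_def by (rule code_img[OF injs])
    moreover have "code n \<sigma> r = nat ak1" using cd rin rr0 unfolding g_def ak1_def by simp
    ultimately show ?thesis by simp
  qed
  have img0: "\<sigma> ` {r0<..n} = insert (\<sigma> r) S"
  proof -
    have "{r0<..n} = insert r {r<..n}" using kk unfolding r_def by auto
    then show ?thesis unfolding S_def by simp
  qed
  have cq0: "code n \<sigma> r0 = rk S (\<sigma> r0) + (if \<sigma> r < \<sigma> r0 then 1 else 0)"
    using code_img[OF injs, of n r0] img0 rk_insert[OF pS finS] by simp
  have cr0: "code n \<sigma> r0 = nat (ak + b + 1)" using cd rin unfolding g_def by simp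
  have pq: "\<sigma> r < \<sigma> r0"
  proof (rule ccontr)
    assume "\<not> \<sigma> r < \<sigma> r0"
    then have lt: "\<sigma> r0 \<le> \<sigma> r" by simp
    then have "code n \<sigma> r0 = rk S (\<sigma> r0)" using cq0 by simp
    also have "\<dots> \<le> rk S (\<sigma> r)" using rk_mono[OF finS lt] .
    finally have "nat (ak + b + 1) \<le> nat ak1" using cr0 rkp by simp
    then show False using c1' b0 ak10 by simp
  qed
  have rkq: "rk S (\<sigma> r0) = nat (ak + b)" using cq0 cr0 pq ak10 c1' b0 by simp
  have m: "nat (ak - 1) < card S" using cardS c3' c1' ak10 b0 kk by simp
  obtain c where cS: "c \<in> S" and rkc: "rk S c = nat (ak - 1)" using rk_surj[OF finS m] by blast
  have pc: "\<sigma> r < c"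
  proof (rule ccontr)
    assume "\<not> \<sigma> r < c"
    moreover have "c \<noteq> \<sigma> r" using cS pS by auto
    ultimately have "c < \<sigma> r" by simp
    then have "rk S c < rk S (\<sigma> r)" using rk_strict[OF finS cS] by simp
    then show False using rkc rkp c1' ak10 by simp
  qed
  have cq: "c < \<sigma> r0"
  proof (rule ccontr)
    assume "\<not> c < \<sigma> r0"
    then have "rk S (\<sigma> r0) \<le> rk S c" using rk_mono[OF finS] by simp
    then show False using rkq rkc b0 c1' ak10 by simp
  qed
  have B: "bs n \<sigma> r c r0"
    unfolding bs_def
  proof (intro conjI)
    show "r = Suc r0" unfolding r_def ..
    show "\<sigma> permutes {1..n}" by (rule perm)
    show "2 \<le> r" using kk unfolding r_def by simp
    show "r \<le> n" using kk by simp
    show "\<sigma> r < c" by (rule pc)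
    show "c < \<sigma> r0" by (rule cq)
    show "c \<in> \<sigma> ` {r<..n}" using cS unfolding S_def .
  qed
  interpret B: bs n \<sigma> r c r0 by (rule B)
  have BS: "B.S = S" unfolding B.S_def S_def ..
  define N where "N = bld n \<sigma> r c"
  define E where "E = \<beta> - ell n N"
  have ell: "ell n N = (ak - 1) - ak1" using B.ell_rk BS rkc rkp c1' ak10 unfolding N_def by simp
  have cN: "cN n N = b" using B.cN_rk BS rkc rkq c1' ak10 b0 unfolding N_def by simp
  have NE: "(N, E) \<in> Nset n"
    unfolding Nset_def using B.N_neutral ell cN \<beta>0 c2' unfolding N_def E_def by auto
  have amap: "map (a_entry n N) [1..<n+1] = a"
  proof (rule nth_equalityI)
    show "length (map (a_entry n N) [1..<n+1]) = length a" using len by simp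
    fix i assume "i < length (map (a_entry n N) [1..<n+1])"
    then have i: "i < n" by (simp del: upt_Suc)
    have e: "map (a_entry n N) [1..<n+1] ! i = int (B.Aval (n - i))" unfolding N_def by (rule B.a_nth[OF i])
    define R where "R = n - i"
    have R: "R \<in> {1..n}" "i = n - R" using i unfolding R_def by auto
    show "map (a_entry n N) [1..<n+1] ! i = a ! i"
    proof (cases "R = r0")
      case True
      have "B.Aval R = Suc (nat (ak - 1))" using B.Aval_r0 BS rkc True by simp
      then have "int (B.Aval R) = ak" using c1' ak10 by simp
      then show ?thesis using e R True unfolding R_def ak_def by simp
    next
      case False
      have "B.Aval R = nat (a ! (n - R))" using cd R False unfolding B.Aval_def g_def by simp
      then have "int (B.Aval R) = a ! i" using nth0[OF i] R by simp
      then show ?thesis using e unfolding R_def by simp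
    qed
  qed
  have "git n (N, E) = (k, a, b, \<beta>)"
    using B.git_val[of E] amap cN kk unfolding N_def E_def by simp
  then show ?thesis using NE by blast
qed

lemma uniq:
  assumes NE: "(N, E) \<in> Nset n" and NE': "(N', E') \<in> Nset n"
    and g: "git n (N, E) = (k, a, b, \<beta>)" and g': "git n (N', E') = (k, a, b, \<beta>)"
  shows "(N, E) = (N', E')"
proof -
  have NN: "N \<in> asm_one_neutral n" "N' \<in> asm_one_neutral n" using NE NE' unfolding Nset_def by auto
  obtain \<sigma> r c r0 where B: "bs n \<sigma> r c r0" and Nb: "N = bld n \<sigma> r c" using struct[OF NN(1)] by blast
  obtain \<sigma>' r' c' r0' where B': "bs n \<sigma>' r' c' r0'" and Nb': "N' = bld n \<sigma>' r' c'" using struct[OF NN(2)] by blast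
  interpret B1: bs n \<sigma> r c r0 by (rule B)
  interpret B2: bs n \<sigma>' r' c' r0' by (rule B')
  have gv: "k = int n + 1 - int r0" "a = map (a_entry n N) [1..<n+1]" "b = cN n N" "\<beta> = E + ell n N"
    using g B1.git_val[of E] unfolding Nb by auto
  have gv': "k = int n + 1 - int r0'" "a = map (a_entry n N') [1..<n+1]" "b = cN n N'" "\<beta> = E' + ell n N'"
    using g' B2.git_val[of E'] unfolding Nb' by auto
  have r0e: "r0' = r0" using gv(1) gv'(1) by simp
  have re: "r' = r" using B1.r0 B2.r0 r0e by simp
  have Av: "int (B1.Aval R) = int (B2.Aval R)" if R: "R \<in> {1..n}" for R
  proof -
    have i: "n - R < n" and ni: "n - (n - R) = R" using R by auto
    have "a ! (n - R) = int (B1.Aval (n - (n - R)))" unfolding gv(2) Nb by (rule B1.a_nth[OF i])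
    moreover have "a ! (n - R) = int (B2.Aval (n - (n - R)))" unfolding gv'(2) Nb' by (rule B2.a_nth[OF i])
    ultimately show ?thesis using ni by simp
  qed
  have codes: "\<forall>R\<in>{1..n}. code n \<sigma> R = code n \<sigma>' R"
  proof
    fix R assume R: "R \<in> {1..n}"
    show "code n \<sigma> R = code n \<sigma>' R"
    proof (cases "R = r0")
      case True
      have e1: "int (code n \<sigma> r0) = int (B1.Aval r0) + cN n N + 1"
        using B1.code_r0 B1.cN_rk B1.Aval_r0 unfolding Nb by simp
      have e2: "int (code n \<sigma>' r0') = int (B2.Aval r0') + cN n N' + 1"
        using B2.code_r0 B2.cN_rk B2.Aval_r0 unfolding Nb' by simp
      have "int (B1.Aval r0) = int (B2.Aval r0')" using Av[of r0] R True r0e by simp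
      then have "int (code n \<sigma> r0) = int (code n \<sigma>' r0')" using e1 e2 gv(3) gv'(3) by simp
      then show ?thesis using True r0e by simp
    next
      case False
      then show ?thesis using Av[OF R] r0e unfolding B1.Aval_def B2.Aval_def by simp
    qed
  qed
  have se: "\<sigma>' = \<sigma>" using code_inj[OF B2.perm B1.perm] codes by simp
  have Se: "B2.S = B1.S" unfolding B1.S_def B2.S_def se re ..
  have "int (B1.Aval r0) = int (B2.Aval r0')" using Av[of r0] r0e B1.sfacts B1.r0 B1.rn by simp
  then have "rk B1.S c = rk B1.S c'" using B1.Aval_r0 B2.Aval_r0 Se by simp
  then have ce: "c = c'" using rk_inj[OF B1.finS B1.cS'] B2.cS' Se by simp
  have Ne: "N = N'" unfolding Nb Nb' se re ce ..
  have "E = E'" using gv(4) gv'(4) Ne by simp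
  then show ?thesis using Ne by simp
qed

theorem lemma4:
  fixes n :: nat and k b \<beta> :: int and a :: "int list"
  assumes "length a = n" and "0 \<le> k" and "\<forall>x\<in>set a. 0 \<le> x" and "0 \<le> b" and "0 \<le> \<beta>"
  shows "((\<exists>NE\<in>Nset n. git n NE = (k, a, b, \<beta>)) \<longleftrightarrow>
           (3 \<le> k \<and> k \<le> int n \<and>
            (\<forall>i\<in>{1..n}. 0 \<le> a ! (i - 1) \<and> a ! (i - 1) \<le> int i - 1) \<and>
            a ! (nat k - 2) < a ! (nat k - 1) \<and>
            a ! (nat k - 2) + \<beta> < a ! (nat k - 1) + b \<and>
            a ! (nat k - 1) + b \<le> k - 2)) \<and>
         (\<forall>NE\<in>Nset n. \<forall>NE'\<in>Nset n.
           git n NE = (k, a, b, \<beta>) \<longrightarrow> git n NE' = (k, a, b, \<beta>) \<longrightarrow> NE = NE')"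
proof (rule conjI)
  show "(\<exists>NE\<in>Nset n. git n NE = (k, a, b, \<beta>)) \<longleftrightarrow>
           (3 \<le> k \<and> k \<le> int n \<and>
            (\<forall>i\<in>{1..n}. 0 \<le> a ! (i - 1) \<and> a ! (i - 1) \<le> int i - 1) \<and>
            a ! (nat k - 2) < a ! (nat k - 1) \<and>
            a ! (nat k - 2) + \<beta> < a ! (nat k - 1) + b \<and>
            a ! (nat k - 1) + b \<le> k - 2)" (is "?L \<longleftrightarrow> ?R")
  proof
    assume ?L
    then obtain N E where NE: "(N, E) \<in> Nset n" "git n (N, E) = (k, a, b, \<beta>)" by auto
    show ?R using fwd[OF NE] .
  next
    assume C: ?R
    show ?L
      by (rule bwd) (use assms C in blast)+
  qed
  show "\<forall>NE\<in>Nset n. \<forall>NE'\<in>Nset n.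
           git n NE = (k, a, b, \<beta>) \<longrightarrow> git n NE' = (k, a, b, \<beta>) \<longrightarrow> NE = NE'"
  proof (intro ballI impI)
    fix NE NE' assume "NE \<in> Nset n" "NE' \<in> Nset n" "git n NE = (k, a, b, \<beta>)" "git n NE' = (k, a, b, \<beta>)"
    then show "NE = NE'" using uniq by (cases NE, cases NE') blast
  qed
qed

end
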